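(* Let $n\geq2$ and let $F$ be the twirling map on $\mathcal{B}(M_n(\mathbb{C}))$. Then: (1) $F(W_n^+)=W_n^+$ and $F(W_n^-)=W_n^-$. (2) For all $T\in\mathcal{B}(M_n(\mathbb{C}))$, $F(T)=\mathrm{Tr}(\widehat{T}p^+)\,W_n^+ + \mathrm{Tr}(\widehat{T}p^-)\,W_n^-$. (3) If $T$ is completely positive with Choi representation $T(x)=\sum_{i=1}^d a_ixa_i^*$ ($x\in M_n(\mathbb{C})$), where $d\in\mathbb{N}$ and $a_1,\dots,a_d\in M_n(\mathbb{C})$, then $F(T)=c^+(T)W_n^+ + c^-(T)W_n^-$, where $c^+(T)=\frac14\sum_{i=1}^d\|a_i+a_i^t\|_2^2$ and $c^-(T)=\frac14\sum_{i=1}^d\|a_i-a_i^t\|_2^2$.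
   Context: $\mathcal{B}(M_n(\mathbb{C}))$ is the space of linear maps $M_n(\mathbb{C})\to M_n(\mathbb{C})$. For a unitary $u\in\mathcal{U}(n)$ and $T\in\mathcal{B}(M_n(\mathbb{C}))$ let $\rho_u(T)(x)=uT(u^txu^{t*})u^*$, i.e. $\rho_u(T)=\mathrm{ad}(u)\,T\,\mathrm{ad}(u^t)$ with $\mathrm{ad}(v)(x)=vxv^*$; the twirling map is $F(T)=\int_{\mathcal{U}(n)}\rho_u(T)\,du$ (Haar probability measure). The Holevo–Werner channels are $W_n^+(x)=\frac{1}{n+1}(\mathrm{Tr}_n(x)1_n+x^t)$ and $W_n^-(x)=\frac{1}{n-1}(\mathrm{Tr}_n(x)1_n-x^t)$, with $\mathrm{Tr}_n$ the non-normalized trace and $x^t$ the transpose. With $(e_{ij})$ the matrix units of $M_n(\mathbb{C})$, the Jamiolkowski transform is $\widehat{T}=\frac1n\sum_{i,j=1}^nT(e_{ij})\otimes e_{ij}\in M_n(\mathbb{C})\otimes M_n(\mathbb{C})$; $s=\sum_{i,j}e_{ij}\otimes e_{ji}$ is the flip and $p^\pm=\frac12(1\pm s)$; $\mathrm{Tr}$ denotes the non-normalized trace on $M_n(\mathbb{C})\otimes M_n(\mathbb{C})$. $\|x\|_2=\tau_n(x^*x)^{1/2}$ with $\tau_n$ the normalized trace on $M_n(\mathbb{C})$. *)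

theory Defs
  imports "HOL-Probability.Probability"
begin

text \<open>Complex n x n matrices are modelled as complex^'n^'n, with n = CARD('n).\<close>

definition msc :: "complex \<Rightarrow> complex^'m^'n \<Rightarrow> complex^'m^'n" where
  "msc c A = (\<chi> i j. c * A$i$j)"

definition mconj :: "complex^'m^'n \<Rightarrow> complex^'m^'n" where
  "mconj A = (\<chi> i j. cnj (A$i$j))"

definition madj :: "complex^'m^'n \<Rightarrow> complex^'n^'m" where
  "madj A = transpose (mconj A)"

definition unitary_mat :: "complex^'n^'n \<Rightarrow> bool" where
  "unitary_mat u \<longleftrightarrow> madj u ** u = mat 1 \<and> u ** madj u = mat 1"

definition clinear_map :: "(complex^'n^'n \<Rightarrow> complex^'n^'n) \<Rightarrow> bool" where
  "clinear_map T \<longleftrightarrow> (\<forall>x y. T (x + y) = T x + T y) \<and> (\<forall>c x. T (msc c x) = msc c (T x))"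

text \<open>Haar probability measure on U(n), realised as a Borel probability measure on the
  ambient matrix space concentrated on the unitary group and invariant under left
  multiplication by unitaries.\<close>
definition haar_unitary :: "(complex^'n^'n) measure \<Rightarrow> bool" where
  "haar_unitary \<mu> \<longleftrightarrow> prob_space \<mu> \<and> sets \<mu> = sets borel \<and>
     (AE u in \<mu>. unitary_mat u) \<and>
     (\<forall>v. unitary_mat v \<longrightarrow> distr \<mu> borel (\<lambda>u. v ** u) = \<mu>)"

text \<open>rho_u(T) = ad(u) T ad(u^t).\<close>
definition rho :: "complex^'n^'n \<Rightarrow> (complex^'n^'n \<Rightarrow> complex^'n^'n) \<Rightarrow> complex^'n^'n \<Rightarrow> complex^'n^'n" where
  "rho u T x = u ** T (transpose u ** x ** madj (transpose u)) ** madj u"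

definition twirl :: "(complex^'n^'n) measure \<Rightarrow> (complex^'n^'n \<Rightarrow> complex^'n^'n) \<Rightarrow> complex^'n^'n \<Rightarrow> complex^'n^'n" where
  "twirl \<mu> T x = integral\<^sup>L \<mu> (\<lambda>u. rho u T x)"

definition Wplus :: "complex^'n^'n \<Rightarrow> complex^'n^'n" where
  "Wplus x = msc (1 / of_nat (CARD('n) + 1)) (msc (trace x) (mat 1) + transpose x)"

definition Wminus :: "complex^'n^'n \<Rightarrow> complex^'n^'n" where
  "Wminus x = msc (1 / (of_nat CARD('n) - 1)) (msc (trace x) (mat 1) - transpose x)"

definition munit :: "'n \<Rightarrow> 'n \<Rightarrow> complex^'n^'n" where
  "munit i j = (\<chi> k l. if k = i \<and> l = j then 1 else 0)"

text \<open>Tensor product M_n \<otimes> M_n realised as matrices indexed by 'n \<times> 'n (Kronecker product).\<close>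
definition kron :: "complex^'n::finite^'n \<Rightarrow> complex^'n^'n \<Rightarrow> complex^('n\<times>'n)^('n\<times>'n)" where
  "kron a b = (\<chi> p q. a$(fst p)$(fst q) * b$(snd p)$(snd q))"

definition jam :: "(complex^'n::finite^'n \<Rightarrow> complex^'n^'n) \<Rightarrow> complex^('n\<times>'n)^('n\<times>'n)" where
  "jam T = msc (1 / of_nat CARD('n)) (\<Sum>i\<in>UNIV. \<Sum>j\<in>UNIV. kron (T (munit i j)) (munit i j))"

definition flip :: "complex^('n::finite\<times>'n)^('n\<times>'n)" where
  "flip = (\<Sum>i\<in>UNIV. \<Sum>j\<in>UNIV. kron (munit i j) (munit j i :: complex^'n^'n))"

definition pplus :: "complex^('n::finite\<times>'n)^('n\<times>'n)" where
  "pplus = msc (1/2) (mat 1 + flip)"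

definition pminus :: "complex^('n::finite\<times>'n)^('n\<times>'n)" where
  "pminus = msc (1/2) (mat 1 - flip)"

definition tau :: "complex^'n^'n \<Rightarrow> complex" where
  "tau x = trace x / of_nat CARD('n)"

definition norm2 :: "complex^'n^'n \<Rightarrow> real" where
  "norm2 x = sqrt (Re (tau (madj x ** x)))"

end

theory Submission
  imports Defs
begin


lemma msc_nth[simp]: "msc c A $ i $ j = c * A $ i $ j"
  by (simp add: msc_def)
lemma madj_nth[simp]: "madj A $ i $ j = cnj (A $ j $ i)"
  by (simp add: madj_def mconj_def transpose_def)
lemma munit_nth[simp]: "munit i j $ k $ l = (if k = i \<and> l = j then 1 else 0)"
  by (simp add: munit_def)
lemma transpose_nth[simp]: "transpose A $ i $ j = A $ j $ i"
  by (simp add: transpose_def)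
lemma mat_nth[simp]: "mat x $ i $ j = (if i = j then x else 0)"
  by (simp add: mat_def)
lemma mm_nth: "(A ** B) $ i $ j = (\<Sum>k\<in>UNIV. A $ i $ k * B $ k $ j)"
  by (simp add: matrix_matrix_mult_def)

lemma sum_prod_UNIV: "(\<Sum>p\<in>(UNIV::('a::finite \<times> 'b::finite) set). f p) = (\<Sum>a\<in>UNIV. \<Sum>b\<in>UNIV. f (a,b))"
  by (simp add: sum.cartesian_product)

lemma unitary_col:
  assumes "unitary_mat u"
  shows "(\<Sum>k\<in>UNIV. cnj (u$k$i) * u$k$j) = (if i = j then 1 else 0)"
proof -
  have "(madj u ** u) $ i $ j = mat 1 $ i $ j" using assms by (simp add: unitary_mat_def)
  then show ?thesis by (simp add: mm_nth)
qed

lemma unitary_col':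
  assumes "unitary_mat u"
  shows "(\<Sum>k\<in>UNIV. u$k$i * cnj (u$k$j)) = (if i = j then 1 else 0)"
proof -
  have "cnj (\<Sum>k\<in>UNIV. cnj (u$k$i) * u$k$j) = cnj (if i = j then 1 else 0)"
    using unitary_col[OF assms, of i j] by simp
  then show ?thesis by (simp add: ac_simps split: if_splits)
qed

lemma unitary_entry_le:
  assumes "unitary_mat u"
  shows "cmod (u$i$j) \<le> 1"
proof -
  have "(\<Sum>k\<in>UNIV. cnj (u$k$j) * u$k$j) = 1" using unitary_col[OF assms, of j j] by simp
  moreover have "(\<Sum>k\<in>UNIV. cnj (u$k$j) * u$k$j) = (\<Sum>k\<in>UNIV. complex_of_real ((cmod (u$k$j))^2))"
    by (intro sum.cong refl, subst complex_norm_square) (rule mult.commute)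
  ultimately have "(\<Sum>k\<in>UNIV. complex_of_real ((cmod (u$k$j))^2)) = 1"
    by argo
  then have s: "(\<Sum>k\<in>UNIV. (cmod (u$k$j))^2) = 1"
    by (metis of_real_eq_1_iff of_real_sum)
  have "(cmod (u$i$j))^2 \<le> (\<Sum>k\<in>UNIV. (cmod (u$k$j))^2)"
    by (rule member_le_sum) auto
  then have "(cmod (u$i$j))^2 \<le> 1" using s by simp
  then show ?thesis by (metis abs_norm_cancel abs_square_le_1)
qed


lemma triple_nth: "(A ** B ** C) $ a $ b = (\<Sum>p\<in>UNIV. \<Sum>q\<in>UNIV. A$a$p * B$p$q * C$q$b)"
  by (simp add: mm_nth sum_distrib_right) (rule sum.swap)

definition Kc :: "(complex^'n^'n \<Rightarrow> complex^'n^'n) \<Rightarrow> 'n \<Rightarrow> 'n \<Rightarrow> 'n \<Rightarrow> 'n \<Rightarrow> complex" where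
  "Kc T a b c d = T (munit c d) $ a $ b"

lemma clin_add: "clinear_map T \<Longrightarrow> T (x + y) = T x + T y"
  by (simp add: clinear_map_def)
lemma clin_msc: "clinear_map T \<Longrightarrow> T (msc c x) = msc c (T x)"
  by (simp add: clinear_map_def)
lemma clin_0: "clinear_map T \<Longrightarrow> T 0 = 0"
  using clin_add[of T 0 0] by simp

lemma clin_sum: "clinear_map T \<Longrightarrow> T (\<Sum>i\<in>A. f i) = (\<Sum>i\<in>A. T (f i))"
proof (induction A rule: infinite_finite_induct)
  case (infinite A) then show ?case by (simp add: clin_0)
next
  case empty then show ?case by (simp add: clin_0)
next
  case (insert x F) then show ?case by (simp add: clin_add)
qed

lemma sum_delta2: "(\<Sum>a\<in>UNIV. \<Sum>b\<in>UNIV. if (i::'a::finite) = a \<and> (j::'b::finite) = b then f a b else 0) = f i j"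
proof -
  have "\<And>a. (\<Sum>b\<in>UNIV. if i = a \<and> j = b then f a b else 0) = (if i = a then f a j else 0)"
    by (case_tac "i = a") (simp_all add: sum.delta sum.delta')
  then show ?thesis by simp
qed

lemma mat_decomp: "x = (\<Sum>c\<in>UNIV. \<Sum>d\<in>UNIV. msc (x$c$d) (munit c d))"
  by (simp add: vec_eq_iff if_distrib[of "\<lambda>z. _ * z"] sum_delta2 cong: if_cong)

lemma lin_nth: "clinear_map T \<Longrightarrow> T x $ a $ b = (\<Sum>c\<in>UNIV. \<Sum>d\<in>UNIV. x$c$d * Kc T a b c d)"
proof -
  assume T: "clinear_map T"
  have "T x = T (\<Sum>c\<in>UNIV. \<Sum>d\<in>UNIV. msc (x$c$d) (munit c d))" by (subst mat_decomp) simp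
  also have "\<dots> = (\<Sum>c\<in>UNIV. \<Sum>d\<in>UNIV. msc (x$c$d) (T (munit c d)))"
    by (simp add: clin_sum[OF T] clin_msc[OF T])
  finally show ?thesis by (simp add: Kc_def)
qed

lemma rho_nth: "clinear_map T \<Longrightarrow> rho u T x $ a $ b =
  (\<Sum>p\<in>UNIV. \<Sum>q\<in>UNIV. u$a$p * cnj (u$b$q) *
     (\<Sum>c\<in>UNIV. \<Sum>d\<in>UNIV. (\<Sum>c'\<in>UNIV. \<Sum>d'\<in>UNIV. u$c'$c * x$c'$d' * cnj (u$d'$d)) * Kc T p q c d))"
  by (simp add: rho_def triple_nth lin_nth mult_ac)


definition Krho :: "complex^'n^'n \<Rightarrow> ('n\<Rightarrow>'n\<Rightarrow>'n\<Rightarrow>'n\<Rightarrow>complex) \<Rightarrow> 'n\<Rightarrow>'n\<Rightarrow>'n\<Rightarrow>'n\<Rightarrow>complex" where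
  "Krho u K a b c d = (\<Sum>p\<in>UNIV. \<Sum>q\<in>UNIV. u$a$p * cnj (u$b$q) *
     (\<Sum>c'\<in>UNIV. \<Sum>d'\<in>UNIV. u$c$c' * cnj (u$d$d') * K p q c' d'))"

lemma munit_coef: "(\<Sum>c''\<in>UNIV. \<Sum>d''\<in>UNIV. u$c''$c' * munit c d $c''$d'' * cnj (u$d''$d')) = u$c$c' * cnj (u$d$d')"
proof -
  have "(\<Sum>c''\<in>UNIV. \<Sum>d''\<in>UNIV. u$c''$c' * munit c d $c''$d'' * cnj (u$d''$d'))
     = (\<Sum>c''\<in>UNIV. \<Sum>d''\<in>UNIV. if c = c'' \<and> d = d'' then u$c''$c' * cnj (u$d''$d') else 0)"
    by (intro sum.cong refl) auto
  then show ?thesis by (simp only: sum_delta2)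
qed

lemma Kc_rho: "clinear_map T \<Longrightarrow> Kc (rho u T) a b c d = Krho u (Kc T) a b c d"
  by (simp only: Kc_def[of "rho u T"] rho_nth munit_coef Krho_def)

definition dg :: "('n \<Rightarrow> complex) \<Rightarrow> complex^'n^'n" where
  "dg z = (\<chi> i j. if i = j then z i else 0)"

lemma dg_nth[simp]: "dg z $ i $ j = (if i = j then z i else 0)"
  by (simp add: dg_def)

lemma dg_unitary: "(\<And>i. cnj (z i) * z i = 1) \<Longrightarrow> unitary_mat (dg z)"
  by (simp add: unitary_mat_def vec_eq_iff mm_nth if_distrib[of "\<lambda>w. w * _"] if_distrib[of "\<lambda>w. _ * w"] mult.commute cong: if_cong)

lemma Krho_dg: "Krho (dg z) K a b c d = z a * cnj (z b) * z c * cnj (z d) * K a b c d"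
  by (simp add: Krho_def if_distrib[of "\<lambda>w. w * _"] if_distrib[of "\<lambda>w. _ * w"] if_distrib[of cnj] cong: if_cong)


definition pm :: "('n \<Rightarrow> 'n) \<Rightarrow> complex^'n^'n" where
  "pm s = (\<chi> i j. if i = s j then 1 else 0)"

lemma pm_nth: "(\<And>x. s (s x) = x) \<Longrightarrow> pm s $ i $ j = (if s i = j then 1 else 0)"
  unfolding pm_def by auto

lemma pm_unitary: assumes "\<And>x. s (s x) = x" shows "unitary_mat (pm s)"
proof -
  have i: "inj s" by (metis assms injI)
  have A: "(\<Sum>k\<in>UNIV. cnj (pm s $ k $ i) * pm s $ k $ j) = (if i = j then 1 else 0)" for i j
    by (simp add: pm_def if_distrib[of "\<lambda>w. w * _"] if_distrib[of cnj] inj_eq[OF i] cong: if_cong)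
  have B: "(\<Sum>k\<in>UNIV. pm s $ i $ k * cnj (pm s $ j $ k)) = (if i = j then 1 else 0)" for i j
    by (simp add: pm_nth[OF assms] if_distrib[of "\<lambda>w. w * _"] if_distrib[of cnj] cong: if_cong)
       (metis assms)
  show ?thesis using A B by (simp add: unitary_mat_def vec_eq_iff mm_nth)
qed

lemma Krho_pm: assumes "\<And>x. s (s x) = x"
  shows "Krho (pm s) K a b c d = K (s a) (s b) (s c) (s d)"
  by (simp add: Krho_def pm_nth[OF assms] if_distrib[of "\<lambda>w. w * _"] if_distrib[of "\<lambda>w. _ * w"] if_distrib[of cnj] cong: if_cong)

definition sw :: "'n \<Rightarrow> 'n \<Rightarrow> 'n \<Rightarrow> 'n" where
  "sw p q x = (if x = p then q else if x = q then p else x)"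

lemma sw_inv: "sw p q (sw p q x) = x"
  by (simp add: sw_def)

lemma sum_two:
  fixes f :: "'n::finite \<Rightarrow> 'b::comm_monoid_add"
  assumes "i0 \<noteq> i1" "\<And>k. k \<noteq> i0 \<Longrightarrow> k \<noteq> i1 \<Longrightarrow> f k = 0"
  shows "(\<Sum>k\<in>UNIV. f k) = f i0 + f i1"
proof -
  have "(\<Sum>k\<in>UNIV. f k) = (\<Sum>k\<in>{i0,i1}. f k)"
    by (rule sum.mono_neutral_right) (auto intro: assms(2))
  then show ?thesis using assms(1) by simp
qed

definition hh :: complex where "hh = of_real (1 / sqrt 2)"

lemma hh_sq: "hh * hh = 1/2"
proof -
  have "hh * hh = of_real ((1 / sqrt 2) * (1 / sqrt 2))" by (simp only: hh_def of_real_mult)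
  also have "(1 / sqrt 2) * (1 / sqrt 2) = (1/2::real)" by (simp add: field_simps)
  finally show ?thesis by simp
qed

lemma cnj_hh[simp]: "cnj hh = hh"
  by (simp add: hh_def)

definition hdm :: "'n \<Rightarrow> 'n \<Rightarrow> complex^'n^'n" where
  "hdm i0 i1 = (\<chi> i j. if (i = i0 \<or> i = i1) \<and> (j = i0 \<or> j = i1) then (if i = i1 \<and> j = i1 then - hh else hh)
      else (if i = j then 1 else 0))"

lemma hdm_nth: "hdm i0 i1 $ i $ j = (if (i = i0 \<or> i = i1) \<and> (j = i0 \<or> j = i1) then (if i = i1 \<and> j = i1 then - hh else hh)
      else (if i = j then 1 else 0))"
  by (simp add: hdm_def)

lemma hdm_unitary: assumes "i0 \<noteq> i1" shows "unitary_mat (hdm i0 i1)"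
proof -
  have A: "(\<Sum>k\<in>UNIV. cnj (hdm i0 i1 $ k $ i) * hdm i0 i1 $ k $ j) = (if i = j then 1 else 0)" for i j
  proof (cases "(i = i0 \<or> i = i1)")
    case True
    then show ?thesis
      apply (subst sum_two[OF assms])
      using assms by (auto simp: hdm_nth hh_sq)
  next
    case False
    then show ?thesis
      by (auto simp: hdm_nth if_distrib[of "\<lambda>w. w * _"] if_distrib[of cnj] cong: if_cong)
  qed
  have B: "(\<Sum>k\<in>UNIV. hdm i0 i1 $ i $ k * cnj (hdm i0 i1 $ j $ k)) = (if i = j then 1 else 0)" for i j
  proof (cases "(i = i0 \<or> i = i1)")
    case True
    then show ?thesis
      apply (subst sum_two[OF assms])
      using assms by (auto simp: hdm_nth hh_sq)
  next
    case False
    then show ?thesis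
      by (auto simp: hdm_nth if_distrib[of "\<lambda>w. w * _"] if_distrib[of cnj] cong: if_cong)
  qed
  show ?thesis using A B by (simp add: unitary_mat_def vec_eq_iff mm_nth)
qed




lemma classify:
  fixes K :: "'n::finite \<Rightarrow> 'n \<Rightarrow> 'n \<Rightarrow> 'n \<Rightarrow> complex"
  assumes inv: "\<And>v a b c d. unitary_mat v \<Longrightarrow> K a b c d = Krho v K a b c d"
    and i01: "i0 \<noteq> i1"
  shows "K a b c d = (if a = b \<and> c = d then K i0 i0 i1 i1 else 0) + (if a = d \<and> b = c then K i0 i1 i1 i0 else 0)"
proof -
  define zm where "zm m = (\<lambda>k::'n. if k = m then \<i> else 1)" for m
  have zmu: "unitary_mat (dg (zm m))" for m
    by (rule dg_unitary) (simp add: zm_def)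
  have ph: "K a b c d = zm m a * cnj (zm m b) * zm m c * cnj (zm m d) * K a b c d" for m a b c d
    using inv[OF zmu, of a b c d m] by (simp add: Krho_dg)
  have zero: "K a b c d = 0" if nt: "\<not> ((a = b \<and> c = d) \<or> (a = d \<and> b = c))" for a b c d
  proof -
    have ex: "\<exists>m. zm m a * cnj (zm m b) * zm m c * cnj (zm m d) \<noteq> 1"
    proof (cases "a \<noteq> b \<and> a \<noteq> d")
      case True
      have "zm a a = \<i>" "zm a b = 1" "zm a d = 1" using True by (auto simp: zm_def)
      moreover have "zm a c = \<i> \<or> zm a c = 1" by (simp add: zm_def)
      ultimately show ?thesis by (intro exI[of _ a]) auto
    next
      case False
      then consider "a = b" "c \<noteq> d" | "a = d" "b \<noteq> c" using nt by blast
      then show ?thesis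
      proof cases
        case 1
        have "zm c c = \<i>" "zm c d = 1" using 1 by (auto simp: zm_def)
        moreover have "zm c a * cnj (zm c a) = 1" by (simp add: zm_def)
        ultimately show ?thesis using 1 by (intro exI[of _ c]) (simp add: ac_simps)
      next
        case 2
        have "zm c c = \<i>" "zm c b = 1" using 2 by (auto simp: zm_def)
        moreover have "zm c a * cnj (zm c a) = 1" by (simp add: zm_def)
        ultimately show ?thesis using 2 by (intro exI[of _ c]) (simp add: ac_simps)
      qed
    qed
    then obtain m where m: "zm m a * cnj (zm m b) * zm m c * cnj (zm m d) \<noteq> 1" by blast
    have "K a b c d = (zm m a * cnj (zm m b) * zm m c * cnj (zm m d)) * K a b c d"
      using ph[of a b c d m] by (simp add: mult.assoc)
    then have "(1 - zm m a * cnj (zm m b) * zm m c * cnj (zm m d)) * K a b c d = 0"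
      by (simp add: algebra_simps)
    then show ?thesis using m by simp
  qed
  have perm: "K a b c d = K (sw p q a) (sw p q b) (sw p q c) (sw p q d)" for p q a b c d
    using inv[OF pm_unitary[of "sw p q"], of a b c d] by (simp add: sw_inv Krho_pm)
  define R where "R = K i0 i0 i0 i0"
  define P where "P = K i0 i0 i1 i1"
  define Q where "Q = K i0 i1 i1 i0"
  have KR: "K a a a a = R" for a
    using perm[of a a a a a i0] by (simp add: sw_def R_def)
  have KP: "K a a c c = P" if "a \<noteq> c" for a c
  proof -
    have 1: "K a a c c = K i0 i0 (sw a i0 c) (sw a i0 c)"
      using perm[of a a c c a i0] by (simp add: sw_def)
    have ne: "sw a i0 c \<noteq> i0" using that by (auto simp: sw_def)
    have 2: "K i0 i0 (sw a i0 c) (sw a i0 c) = K i0 i0 i1 i1"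
      using perm[of i0 i0 "sw a i0 c" "sw a i0 c" "sw a i0 c" i1] ne i01 by (simp add: sw_def)
    show ?thesis using 1 2 P_def by simp
  qed
  have KQ: "K a c c a = Q" if "a \<noteq> c" for a c
  proof -
    have 1: "K a c c a = K i0 (sw a i0 c) (sw a i0 c) i0"
      using perm[of a c c a a i0] by (simp add: sw_def)
    have ne: "sw a i0 c \<noteq> i0" using that by (auto simp: sw_def)
    have 2: "K i0 (sw a i0 c) (sw a i0 c) i0 = K i0 i1 i1 i0"
      using perm[of i0 "sw a i0 c" "sw a i0 c" i0 "sw a i0 c" i1] ne i01 by (simp add: sw_def)
    show ?thesis using 1 2 Q_def by simp
  qed
  have Kform: "K a b c d = (if a = b \<and> c = d then (if a = c then R else P) else if a = d \<and> b = c then Q else 0)" for a b c d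
  proof (cases "a = b \<and> c = d")
    case True
    show ?thesis
    proof (cases "a = c")
      case True2: True
      from True True2 have h: "K a b c d = K a a a a" by metis
      have e: "(if a = b \<and> c = d then (if a = c then R else P) else if a = d \<and> b = c then Q else 0) = R"
        using True True2 by auto
      show ?thesis unfolding e using h KR[of a] by (rule trans)
    next
      case False2: False
      from True have h: "K a b c d = K a a c c" by metis
      have e: "(if a = b \<and> c = d then (if a = c then R else P) else if a = d \<and> b = c then Q else 0) = P"
        using True False2 by auto
      show ?thesis unfolding e using h KP[OF False2] by (rule trans)
    qed
  next
    case False
    show ?thesis
    proof (cases "a = d \<and> b = c")
      case True
      then have h: "K a b c d = K a c c a" by metis
      have ac: "a \<noteq> c" using False True by auto
      have e: "(if a = b \<and> c = d then (if a = c then R else P) else if a = d \<and> b = c then Q else 0) = Q"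
        using True False by auto
      show ?thesis unfolding e using h KQ[OF ac] by (rule trans)
    next
      case False2: False
      have e: "(if a = b \<and> c = d then (if a = c then R else P) else if a = d \<and> b = c then Q else 0) = 0"
        using False2 False by (simp only: if_False if_not_P)
      show ?thesis unfolding e using False False2 by (intro zero) blast
    qed
  qed
  have H: "K i1 i1 i0 i0 = Krho (hdm i0 i1) K i1 i1 i0 i0"
    by (rule inv[OF hdm_unitary[OF i01]])
  also have "\<dots> = hh*hh*hh*hh * (2*R + 2*P - 2*Q)"
    unfolding Krho_def
    apply (subst sum_two[OF i01], simp add: hdm_nth)+ 
    using i01 apply (simp add: hdm_nth)
    apply (simp only: Kform)
    using i01 apply (simp add: not_sym[OF i01])
    by (simp add: algebra_simps)
  finally have e: "K i1 i1 i0 i0 = hh*hh*hh*hh * (2*R + 2*P - 2*Q)" .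
  have e2: "K i1 i1 i0 i0 = P" using Kform[of i1 i1 i0 i0] i01 by simp
  have hh4: "hh*hh*hh*hh = 1/4"
  proof -
    have "hh*hh*hh*hh = (hh*hh)*(hh*hh)" by (simp only: mult.assoc)
    then show ?thesis by (simp only: hh_sq) simp
  qed
  have "P = hh*hh*hh*hh * (2*R + 2*P - 2*Q)" by (metis e e2)
  then have f: "P = 1/4 * (2*R + 2*P - 2*Q)" by (simp only: hh4)
  have "4 * P = 4 * (1/4 * (2*R + 2*P - 2*Q))" using f by (rule arg_cong)
  then have "2 * P = 2 * (R - Q)" by (simp add: algebra_simps)
  then have "P = R - Q" by (rule mult_left_cancel[THEN iffD1, rotated]) simp
  then have RPQ: "R = P + Q" by simp
  show ?thesis
    unfolding P_def[symmetric] Q_def[symmetric] Kform[of a b c d] RPQ by simp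
qed



lemma norm_vec_le_sum: "norm (v::'a::real_normed_vector^'n) \<le> (\<Sum>i\<in>UNIV. norm (v$i))"
  by (simp add: norm_vec_def L2_set_le_sum)

lemma n3: "cmod a \<le> 1 \<Longrightarrow> cmod b \<le> 1 \<Longrightarrow> cmod (a * y * b) \<le> cmod y"
proof -
  assume a: "cmod a \<le> 1" and b: "cmod b \<le> 1"
  have "cmod (a * y * b) = cmod a * (cmod y * cmod b)" by (simp add: norm_mult)
  also have "\<dots> \<le> 1 * (cmod y * 1)"
    using a b by (intro mult_mono) auto
  finally show ?thesis by simp
qed

lemma n2: "cmod a \<le> 1 \<Longrightarrow> cmod b \<le> 1 \<Longrightarrow> cmod (a * b * y) \<le> cmod y"
  using n3[of a b y] by (simp add: ac_simps)

lemma bl_comp: "bounded_linear (\<lambda>A::('a::real_normed_vector)^'m^'n. A $ i $ j)"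
  by (rule bounded_linear_compose[OF bounded_linear_vec_nth bounded_linear_vec_nth])

definition rbound :: "(complex^'n^'n \<Rightarrow> complex^'n^'n) \<Rightarrow> complex^'n^'n \<Rightarrow> real" where
  "rbound T x = (\<Sum>p\<in>UNIV. \<Sum>q\<in>UNIV. \<Sum>c\<in>UNIV. \<Sum>d\<in>UNIV.
            (\<Sum>c'\<in>UNIV. \<Sum>d'\<in>UNIV. cmod (x$c'$d')) * cmod (Kc T p q c d))"

definition rbound2 :: "(complex^'n^'n \<Rightarrow> complex^'n^'n) \<Rightarrow> complex^'n^'n \<Rightarrow> real" where
  "rbound2 T x = (\<Sum>a\<in>(UNIV::'n set). \<Sum>b\<in>(UNIV::'n set). rbound T x)"

lemma rho_bound:
  assumes T: "clinear_map T" and u: "unitary_mat u"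
  shows "cmod (rho u T x $ a $ b) \<le> (\<Sum>p\<in>UNIV. \<Sum>q\<in>UNIV. \<Sum>c\<in>UNIV. \<Sum>d\<in>UNIV.
            (\<Sum>c'\<in>UNIV. \<Sum>d'\<in>UNIV. cmod (x$c'$d')) * cmod (Kc T p q c d))"
proof -
  have Y: "cmod (\<Sum>c'\<in>UNIV. \<Sum>d'\<in>UNIV. u$c'$c * x$c'$d' * cnj (u$d'$d)) \<le> (\<Sum>c'\<in>UNIV. \<Sum>d'\<in>UNIV. cmod (x$c'$d'))" for c d
    by (intro sum_norm_le n3) (auto simp: unitary_entry_le[OF u])
  have I: "cmod (\<Sum>c\<in>UNIV. \<Sum>d\<in>UNIV. (\<Sum>c'\<in>UNIV. \<Sum>d'\<in>UNIV. u$c'$c * x$c'$d' * cnj (u$d'$d)) * Kc T p q c d)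
     \<le> (\<Sum>c\<in>UNIV. \<Sum>d\<in>UNIV. (\<Sum>c'\<in>UNIV. \<Sum>d'\<in>UNIV. cmod (x$c'$d')) * cmod (Kc T p q c d))" for p q
    by (intro sum_norm_le) (auto simp: norm_mult intro!: mult_right_mono Y)
  show ?thesis
    unfolding rho_nth[OF T]
    apply (intro sum_norm_le)
    apply (rule order_trans[OF _ I])
    apply (rule n2)
    by (auto simp: unitary_entry_le[OF u])
qed

lemma rho_cont: "clinear_map T \<Longrightarrow> continuous_on UNIV (\<lambda>u. rho u T x $ a $ b)"
  unfolding rho_nth
  by (intro continuous_intros continuous_on_component continuous_on_id)

lemma rho_cont_full: "clinear_map T \<Longrightarrow> continuous_on UNIV (\<lambda>u. rho u T x)"
proof -
  assume T: "clinear_map T"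
  have e: "(\<lambda>u. rho u T x) = (\<lambda>u. \<chi> a b. rho u T x $ a $ b)" by simp
  show ?thesis unfolding e by (intro continuous_on_vec_lambda rho_cont[OF T])
qed

lemma haar_sets: "haar_unitary \<mu> \<Longrightarrow> sets \<mu> = sets borel"
  by (simp add: haar_unitary_def)
lemma haar_prob: "haar_unitary \<mu> \<Longrightarrow> prob_space \<mu>"
  by (simp add: haar_unitary_def)
lemma haar_AE: "haar_unitary \<mu> \<Longrightarrow> AE u in \<mu>. unitary_mat u"
  by (simp add: haar_unitary_def)

lemma meas_borel: "haar_unitary \<mu> \<Longrightarrow> continuous_on UNIV f \<Longrightarrow> f \<in> borel_measurable \<mu>"
  using measurable_cong_sets[OF haar_sets refl, of \<mu> borel] borel_measurable_continuous_onI by blast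

lemma rho_comp_integrable:
  assumes H: "haar_unitary \<mu>" and T: "clinear_map T"
  shows "integrable \<mu> (\<lambda>u. rho u T x $ a $ b)"
proof -
  interpret prob_space \<mu> using haar_prob[OF H] .
  show ?thesis
    apply (rule integrable_const_bound)
    using haar_AE[OF H] apply (rule AE_mp) apply (intro AE_I2 impI) apply (erule rho_bound[OF T])
    by (rule meas_borel[OF H rho_cont[OF T]])
qed

lemma rho_integrable:
  assumes H: "haar_unitary \<mu>" and T: "clinear_map T"
  shows "integrable \<mu> (\<lambda>u. rho u T x)"
proof -
  interpret prob_space \<mu> using haar_prob[OF H] .
  have b: "norm (rho u T x) \<le> rbound2 T x" if u: "unitary_mat u" for u
    unfolding rbound2_def
    apply (rule order_trans[OF norm_vec_le_sum])
    apply (rule sum_mono)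
    apply (rule order_trans[OF norm_vec_le_sum])
    apply (rule sum_mono)
    using rho_bound[OF T u] by (simp add: rbound_def)
  show ?thesis
    apply (rule integrable_const_bound)
    using haar_AE[OF H] apply (rule AE_mp) apply (intro AE_I2 impI) apply (erule b)
    by (rule meas_borel[OF H rho_cont_full[OF T]])
qed

lemma twirl_nth:
  assumes H: "haar_unitary \<mu>" and T: "clinear_map T"
  shows "twirl \<mu> T x $ a $ b = integral\<^sup>L \<mu> (\<lambda>u. rho u T x $ a $ b)"
proof -
  show ?thesis unfolding twirl_def
    by (rule integral_bounded_linear[OF bl_comp rho_integrable[OF H T], symmetric])
qed


lemma mm_msc_right: "A ** msc c B = msc c (A ** B)"
  by (simp add: vec_eq_iff mm_nth sum_distrib_left mult_ac)
lemma mm_msc_left: "msc c A ** B = msc c (A ** B)"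
  by (simp add: vec_eq_iff mm_nth sum_distrib_left mult_ac)
lemma madj_mult: "madj (A ** B) = madj B ** madj A"
  by (simp add: vec_eq_iff mm_nth cnj_sum mult.commute)

lemma matrix_add_rdistrib': "((A + B) ** C) = (A ** C) + (B ** C)"
  by (simp add: vec_eq_iff mm_nth sum.distrib distrib_right)

lemma rho_add: "clinear_map T \<Longrightarrow> rho u T (x + y) = rho u T x + rho u T y"
  by (simp add: rho_def matrix_add_ldistrib matrix_add_rdistrib' clin_add)
lemma rho_msc: "clinear_map T \<Longrightarrow> rho u T (msc c x) = msc c (rho u T x)"
  by (simp add: rho_def mm_msc_right mm_msc_left clin_msc)

lemma twirl_clinear:
  assumes H: "haar_unitary \<mu>" and T: "clinear_map T"
  shows "clinear_map (twirl \<mu> T)"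
  unfolding clinear_map_def
proof (intro conjI allI)
  fix x y
  show "twirl \<mu> T (x + y) = twirl \<mu> T x + twirl \<mu> T y"
    by (simp add: vec_eq_iff twirl_nth[OF H T] rho_add[OF T]
        Bochner_Integration.integral_add[OF rho_comp_integrable[OF H T] rho_comp_integrable[OF H T]])
next
  fix c x
  show "twirl \<mu> T (msc c x) = msc c (twirl \<mu> T x)"
    by (simp add: vec_eq_iff twirl_nth[OF H T] rho_msc[OF T])
qed

lemma rho_comp: "rho (v ** u) T x = v ** rho u T (transpose v ** x ** madj (transpose v)) ** madj v"
  by (simp add: rho_def matrix_transpose_mul madj_mult matrix_mul_assoc)

lemma lmult_cont: "continuous_on UNIV (\<lambda>u::complex^'n^'n. v ** u)"
proof -
  have e: "(\<lambda>u::complex^'n^'n. v ** u) = (\<lambda>u. \<chi> i j. \<Sum>k\<in>UNIV. v$i$k * u$k$j)"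
    by (simp add: matrix_matrix_mult_def)
  show ?thesis unfolding e
    by (intro continuous_intros continuous_on_component continuous_on_id)
qed

lemma twirl_invariant:
  assumes H: "haar_unitary \<mu>" and T: "clinear_map T" and v: "unitary_mat v"
  shows "rho v (twirl \<mu> T) x = twirl \<mu> T x"
proof -
  define Y where "Y = transpose v ** x ** madj (transpose v)"
  have "rho v (twirl \<mu> T) x $ a $ b = twirl \<mu> T x $ a $ b" for a b
  proof -
    have "rho v (twirl \<mu> T) x $ a $ b = (\<Sum>p\<in>UNIV. \<Sum>q\<in>UNIV. v$a$p * twirl \<mu> T Y $p$q * madj v $q$b)"
      by (simp add: rho_def triple_nth Y_def)
    also have "\<dots> = (\<Sum>p\<in>UNIV. \<Sum>q\<in>UNIV. integral\<^sup>L \<mu> (\<lambda>u. v$a$p * rho u T Y $p$q * madj v $q$b))"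
      by (simp add: twirl_nth[OF H T])
    also have "\<dots> = integral\<^sup>L \<mu> (\<lambda>u. \<Sum>p\<in>UNIV. \<Sum>q\<in>UNIV. v$a$p * rho u T Y $p$q * madj v $q$b)"
      by (simp add: rho_comp_integrable[OF H T])
    also have "\<dots> = integral\<^sup>L \<mu> (\<lambda>u. rho (v ** u) T x $ a $ b)"
      by (simp add: rho_comp triple_nth Y_def)
    also have "\<dots> = integral\<^sup>L (distr \<mu> borel (\<lambda>u. v ** u)) (\<lambda>w. rho w T x $ a $ b)"
      by (rule integral_distr[symmetric], rule meas_borel[OF H lmult_cont],
          rule borel_measurable_continuous_onI[OF rho_cont[OF T]])
    also have "\<dots> = twirl \<mu> T x $ a $ b"
      using H v by (simp add: haar_unitary_def twirl_nth[OF H T])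
    finally show ?thesis .
  qed
  then show ?thesis by (simp add: vec_eq_iff)
qed



definition psi :: "(complex^'n^'n \<Rightarrow> complex^'n^'n) \<Rightarrow> complex" where
  "psi T = (\<Sum>a\<in>UNIV. \<Sum>c\<in>UNIV. Kc T a a c c)"
definition phi :: "(complex^'n^'n \<Rightarrow> complex^'n^'n) \<Rightarrow> complex" where
  "phi T = (\<Sum>a\<in>UNIV. \<Sum>b\<in>UNIV. Kc T a b b a)"

lemma sum_push_in: "(\<Sum>a\<in>A. \<Sum>p\<in>P. \<Sum>q\<in>Q. \<Sum>c\<in>C. \<Sum>d\<in>D. f a p q c d) = (\<Sum>p\<in>P. \<Sum>q\<in>Q. \<Sum>c\<in>C. \<Sum>d\<in>D. \<Sum>a\<in>A. f a p q c d)"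
proof -
  have "(\<Sum>a\<in>A. \<Sum>p\<in>P. \<Sum>q\<in>Q. \<Sum>c\<in>C. \<Sum>d\<in>D. f a p q c d) = (\<Sum>p\<in>P. \<Sum>a\<in>A. \<Sum>q\<in>Q. \<Sum>c\<in>C. \<Sum>d\<in>D. f a p q c d)"
    by (rule sum.swap)
  also have "\<dots> = (\<Sum>p\<in>P. \<Sum>q\<in>Q. \<Sum>a\<in>A. \<Sum>c\<in>C. \<Sum>d\<in>D. f a p q c d)"
    by (rule sum.cong[OF refl], rule sum.swap)
  also have "\<dots> = (\<Sum>p\<in>P. \<Sum>q\<in>Q. \<Sum>c\<in>C. \<Sum>a\<in>A. \<Sum>d\<in>D. f a p q c d)"
    by (rule sum.cong[OF refl], rule sum.cong[OF refl], rule sum.swap)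
  also have "\<dots> = (\<Sum>p\<in>P. \<Sum>q\<in>Q. \<Sum>c\<in>C. \<Sum>d\<in>D. \<Sum>a\<in>A. f a p q c d)"
    by (rule sum.cong[OF refl], rule sum.cong[OF refl], rule sum.cong[OF refl], rule sum.swap)
  finally show ?thesis .
qed

lemma sum_push_in2: "(\<Sum>a\<in>A. \<Sum>b\<in>B. \<Sum>p\<in>P. \<Sum>q\<in>Q. \<Sum>c\<in>C. \<Sum>d\<in>D. f a b p q c d) = (\<Sum>p\<in>P. \<Sum>q\<in>Q. \<Sum>c\<in>C. \<Sum>d\<in>D. \<Sum>a\<in>A. \<Sum>b\<in>B. f a b p q c d)"
proof -
  have "(\<Sum>a\<in>A. \<Sum>b\<in>B. \<Sum>p\<in>P. \<Sum>q\<in>Q. \<Sum>c\<in>C. \<Sum>d\<in>D. f a b p q c d) = (\<Sum>a\<in>A. \<Sum>p\<in>P. \<Sum>q\<in>Q. \<Sum>c\<in>C. \<Sum>d\<in>D. \<Sum>b\<in>B. f a b p q c d)"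
    by (rule sum.cong[OF refl], rule sum_push_in)
  also have "\<dots> = (\<Sum>p\<in>P. \<Sum>q\<in>Q. \<Sum>c\<in>C. \<Sum>d\<in>D. \<Sum>a\<in>A. \<Sum>b\<in>B. f a b p q c d)"
    by (rule sum_push_in)
  finally show ?thesis .
qed

lemma sum_prod3: "(\<Sum>a\<in>A. \<Sum>b\<in>B. f a * g b * (k::complex)) = (\<Sum>a\<in>A. f a) * (\<Sum>b\<in>B. g b) * k"
proof -
  have "(\<Sum>a\<in>A. f a) * (\<Sum>b\<in>B. g b) * k = (\<Sum>a\<in>A. \<Sum>b\<in>B. f a * g b) * k" by (simp add: sum_product)
  also have "\<dots> = (\<Sum>a\<in>A. \<Sum>b\<in>B. f a * g b * k)" by (simp add: sum_distrib_right)
  finally show ?thesis ..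
qed

lemma sum_if_out: "(\<Sum>x\<in>A. if P then f x else 0) = (if P then (\<Sum>x\<in>A. f x) else 0)"
  by (cases P) auto

lemma phi_Krho:
  assumes u: "unitary_mat u"
  shows "(\<Sum>a\<in>UNIV. \<Sum>b\<in>UNIV. Krho u K a b b a) = (\<Sum>p\<in>UNIV. \<Sum>q\<in>UNIV. K p q q p)"
proof -
  have "(\<Sum>a\<in>UNIV. \<Sum>b\<in>UNIV. Krho u K a b b a) =
     (\<Sum>a\<in>UNIV. \<Sum>b\<in>UNIV. \<Sum>p\<in>UNIV. \<Sum>q\<in>UNIV. \<Sum>c\<in>UNIV. \<Sum>d\<in>UNIV.
        (u$a$p * cnj (u$a$d)) * (cnj (u$b$q) * u$b$c) * K p q c d)"
    unfolding Krho_def by (simp add: sum_distrib_left mult_ac)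
  also have "\<dots> = (\<Sum>p\<in>UNIV. \<Sum>q\<in>UNIV. \<Sum>c\<in>UNIV. \<Sum>d\<in>UNIV. \<Sum>a\<in>UNIV. \<Sum>b\<in>UNIV.
        (u$a$p * cnj (u$a$d)) * (cnj (u$b$q) * u$b$c) * K p q c d)"
    by (rule sum_push_in2)
  also have "\<dots> = (\<Sum>p\<in>UNIV. \<Sum>q\<in>UNIV. \<Sum>c\<in>UNIV. \<Sum>d\<in>UNIV.
        (\<Sum>a\<in>UNIV. u$a$p * cnj (u$a$d)) * (\<Sum>b\<in>UNIV. cnj (u$b$q) * u$b$c) * K p q c d)"
    by (intro sum.cong refl) (rule sum_prod3)
  also have "\<dots> = (\<Sum>p\<in>UNIV. \<Sum>q\<in>UNIV. K p q q p)"
    by (simp add: unitary_col[OF u] unitary_col'[OF u] if_distrib[of "\<lambda>w. w * _"] sum.delta sum.delta' cong: if_cong)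
  finally show ?thesis .
qed

lemma psi_Krho:
  assumes u: "unitary_mat u"
  shows "(\<Sum>a\<in>UNIV. \<Sum>b\<in>UNIV. Krho u K a a b b) = (\<Sum>p\<in>UNIV. \<Sum>q\<in>UNIV. K p p q q)"
proof -
  have "(\<Sum>a\<in>UNIV. \<Sum>b\<in>UNIV. Krho u K a a b b) =
     (\<Sum>a\<in>UNIV. \<Sum>b\<in>UNIV. \<Sum>p\<in>UNIV. \<Sum>q\<in>UNIV. \<Sum>c\<in>UNIV. \<Sum>d\<in>UNIV.
        (u$a$p * cnj (u$a$q)) * (u$b$c * cnj (u$b$d)) * K p q c d)"
    unfolding Krho_def by (simp add: sum_distrib_left mult_ac)
  also have "\<dots> = (\<Sum>p\<in>UNIV. \<Sum>q\<in>UNIV. \<Sum>c\<in>UNIV. \<Sum>d\<in>UNIV. \<Sum>a\<in>UNIV. \<Sum>b\<in>UNIV.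
        (u$a$p * cnj (u$a$q)) * (u$b$c * cnj (u$b$d)) * K p q c d)"
    by (rule sum_push_in2)
  also have "\<dots> = (\<Sum>p\<in>UNIV. \<Sum>q\<in>UNIV. \<Sum>c\<in>UNIV. \<Sum>d\<in>UNIV.
        (\<Sum>a\<in>UNIV. u$a$p * cnj (u$a$q)) * (\<Sum>b\<in>UNIV. u$b$c * cnj (u$b$d)) * K p q c d)"
    by (intro sum.cong refl) (rule sum_prod3)
  also have "\<dots> = (\<Sum>p\<in>UNIV. \<Sum>q\<in>UNIV. K p p q q)"
    by (simp add: unitary_col'[OF u] if_distrib[of "\<lambda>w. w * _"] sum_if_out sum.delta sum.delta' cong: if_cong)
  finally show ?thesis .
qed


lemma integral_AE_const:
  assumes H: "haar_unitary \<mu>" and f: "integrable \<mu> f" and ae: "AE u in \<mu>. f u = (c::complex)"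
  shows "integral\<^sup>L \<mu> f = c"
proof -
  interpret prob_space \<mu> using haar_prob[OF H] .
  have "integral\<^sup>L \<mu> f = integral\<^sup>L \<mu> (\<lambda>_. c)"
    by (rule integral_cong_AE[OF borel_measurable_integrable[OF f] _ ae]) simp
  also have "\<dots> = c" by (simp add: prob_space)
  finally show ?thesis .
qed

lemma psi_rho: "clinear_map T \<Longrightarrow> unitary_mat u \<Longrightarrow> psi (rho u T) = psi T"
  by (simp add: psi_def Kc_rho psi_Krho)
lemma phi_rho: "clinear_map T \<Longrightarrow> unitary_mat u \<Longrightarrow> phi (rho u T) = phi T"
  by (simp add: phi_def Kc_rho phi_Krho)

lemma psi_twirl:
  assumes H: "haar_unitary \<mu>" and T: "clinear_map T"
  shows "psi (twirl \<mu> T) = psi T"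
proof -
  have "psi (twirl \<mu> T) = (\<Sum>a\<in>UNIV. \<Sum>c\<in>UNIV. integral\<^sup>L \<mu> (\<lambda>u. rho u T (munit c c) $ a $ a))"
    by (simp add: psi_def Kc_def twirl_nth[OF H T])
  also have "\<dots> = integral\<^sup>L \<mu> (\<lambda>u. \<Sum>a\<in>UNIV. \<Sum>c\<in>UNIV. rho u T (munit c c) $ a $ a)"
    by (simp add: rho_comp_integrable[OF H T])
  also have "\<dots> = psi T"
    apply (rule integral_AE_const[OF H])
     apply (simp add: rho_comp_integrable[OF H T])
    using haar_AE[OF H] apply (rule AE_mp)
    apply (intro AE_I2 impI)
    using psi_rho[OF T] by (simp add: psi_def Kc_def)
  finally show ?thesis .
qed

lemma phi_twirl:
  assumes H: "haar_unitary \<mu>" and T: "clinear_map T"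
  shows "phi (twirl \<mu> T) = phi T"
proof -
  have "phi (twirl \<mu> T) = (\<Sum>a\<in>UNIV. \<Sum>b\<in>UNIV. integral\<^sup>L \<mu> (\<lambda>u. rho u T (munit b a) $ a $ b))"
    by (simp add: phi_def Kc_def twirl_nth[OF H T])
  also have "\<dots> = integral\<^sup>L \<mu> (\<lambda>u. \<Sum>a\<in>UNIV. \<Sum>b\<in>UNIV. rho u T (munit b a) $ a $ b)"
    by (simp add: rho_comp_integrable[OF H T])
  also have "\<dots> = phi T"
    apply (rule integral_AE_const[OF H])
     apply (simp add: rho_comp_integrable[OF H T])
    using haar_AE[OF H] apply (rule AE_mp)
    apply (intro AE_I2 impI)
    using phi_rho[OF T] by (simp add: phi_def Kc_def)
  finally show ?thesis .
qed



lemma kron_nth: "kron A B $ p $ q = A $ fst p $ fst q * B $ snd p $ snd q"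
  by (simp add: kron_def)

lemma jam_nth: "jam T $ p $ q = 1 / of_nat CARD('n) * Kc T (fst p) (fst q) (snd p) (snd q)"
  for T :: "complex^'n^'n \<Rightarrow> complex^'n^'n"
proof -
  have "jam T $ p $ q = 1 / of_nat CARD('n) *
     (\<Sum>i\<in>UNIV. \<Sum>j\<in>UNIV. if snd p = i \<and> snd q = j then T (munit i j) $ fst p $ fst q else 0)"
    unfolding jam_def msc_nth sum_component kron_nth munit_nth
    by (simp add: if_distrib[of "\<lambda>w. _ * w"] cong: if_cong)
  then show ?thesis by (simp only: sum_delta2 Kc_def)
qed

lemma flip_nth: "(flip :: complex^('n::finite\<times>'n)^('n\<times>'n)) $ p $ q = (if fst p = snd q \<and> snd p = fst q then 1 else 0)"
proof -
  have "(flip :: complex^('n::finite\<times>'n)^('n\<times>'n)) $ p $ q =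
     (\<Sum>i\<in>UNIV. \<Sum>j\<in>UNIV. if fst p = i \<and> fst q = j then (if snd p = j \<and> snd q = i then 1 else 0) else 0)"
    unfolding flip_def sum_component kron_nth munit_nth
    by (intro sum.cong refl) auto
  then show ?thesis by (simp only: sum_delta2) auto
qed

lemma sum_delta_pair: "(\<Sum>q\<in>(UNIV::('a::finite\<times>'a) set). (f q::complex) * (if fst q = a \<and> snd q = b then 1 else 0)) = f (a, b)"
proof -
  have "(\<Sum>q\<in>(UNIV::('a\<times>'a) set). f q * (if fst q = a \<and> snd q = b then 1 else 0)) =
     (\<Sum>x\<in>UNIV. \<Sum>y\<in>UNIV. if a = x \<and> b = y then f (x, y) else 0)"
    unfolding sum_prod_UNIV by (intro sum.cong refl) auto
  then show ?thesis by (simp only: sum_delta2)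
qed

lemma trace_jam_flip:
  "trace (jam T ** (flip :: complex^('n::finite\<times>'n)^('n\<times>'n))) = 1 / of_nat CARD('n) * phi T"
  for T :: "complex^'n^'n \<Rightarrow> complex^'n^'n"
proof -
  have "trace (jam T ** (flip :: complex^('n::finite\<times>'n)^('n\<times>'n))) =
      (\<Sum>p\<in>UNIV. \<Sum>q\<in>UNIV. jam T $ p $ q * (if fst q = snd p \<and> snd q = fst p then 1 else 0))"
    by (simp only: trace_def mm_nth flip_nth)
  also have "\<dots> = (\<Sum>p\<in>UNIV. jam T $ p $ (snd p, fst p))"
    by (simp only: sum_delta_pair)
  also have "\<dots> = 1 / of_nat CARD('n) * phi T"
    by (simp only: sum_prod_UNIV jam_nth fst_conv snd_conv phi_def sum_distrib_left)
  finally show ?thesis .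
qed

lemma trace_jam:
  "trace (jam T) = 1 / of_nat CARD('n) * psi T"
  for T :: "complex^'n^'n \<Rightarrow> complex^'n^'n"
  by (simp add: trace_def sum_prod_UNIV jam_nth psi_def sum_distrib_left)

lemma trace_msc: "trace (msc c A) = c * trace A"
  by (simp add: trace_def sum_distrib_left)


lemma mm_sub: "(A::complex^'m^'n) ** (B - C) = A ** B - A ** C"
  by (simp add: vec_eq_iff mm_nth sum_subtractf right_diff_distrib)

lemma trace_jam_pplus: "trace (jam T ** pplus) = (psi T + phi T) / (2 * of_nat CARD('n))"
  for T :: "complex^'n^'n \<Rightarrow> complex^'n^'n"
proof -
  have "trace (jam T ** pplus) = 1/2 * (trace (jam T) + trace (jam T ** flip))"
    by (simp only: pplus_def mm_msc_right trace_msc matrix_add_ldistrib trace_add matrix_mul_rid)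
  also have "\<dots> = 1/2 * (1 / of_nat CARD('n) * psi T + 1 / of_nat CARD('n) * phi T)"
    by (simp only: trace_jam trace_jam_flip)
  also have "\<dots> = (psi T + phi T) / (2 * of_nat CARD('n))"
    by (simp add: field_simps)
  finally show ?thesis .
qed

lemma trace_jam_pminus: "trace (jam T ** pminus) = (psi T - phi T) / (2 * of_nat CARD('n))"
  for T :: "complex^'n^'n \<Rightarrow> complex^'n^'n"
proof -
  have "trace (jam T ** pminus) = 1/2 * (trace (jam T) - trace (jam T ** flip))"
    by (simp only: pminus_def mm_msc_right trace_msc mm_sub trace_sub matrix_mul_rid)
  also have "\<dots> = 1/2 * (1 / of_nat CARD('n) * psi T - 1 / of_nat CARD('n) * phi T)"
    by (simp only: trace_jam trace_jam_flip)
  also have "\<dots> = (psi T - phi T) / (2 * of_nat CARD('n))"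
    by (simp add: field_simps)
  finally show ?thesis .
qed



lemma alg_id:
  fixes N P Q t y :: complex
  assumes "N \<noteq> 0" "N + 1 \<noteq> 0" "N - 1 \<noteq> 0"
  shows "P*t + Q*y = (N*N*P + N*Q + (N*P + N*N*Q))/(2*N) * (1/(N+1) * (t + y))
      + (N*N*P + N*Q - (N*P + N*N*Q))/(2*N) * (1/(N-1) * (t - y))"
proof -
  have a2: "2 * N + 2 \<noteq> 0" "2 * N - 2 \<noteq> 0"
  proof -
    have e: "N + 1 = (2 * N + 2) / 2" "N - 1 = (2 * N - 2) / 2" by (simp_all add: field_simps)
    show "2 * N + 2 \<noteq> 0" using e(1) assms(2) by (metis div_0)
    show "2 * N - 2 \<noteq> 0" using e(2) assms(3) by (metis div_0)
  qed
  have n1: "N*N*P + N*Q + (N*P + N*N*Q) = (P+Q) * (N*(N+1))" by (simp add: algebra_simps)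
  have n2: "N*N*P + N*Q - (N*P + N*N*Q) = (P-Q) * (N*(N-1))" by (simp add: algebra_simps)
  have e1: "(N*N*P + N*Q + (N*P + N*N*Q))/(2*N) * (1/(N+1)) = (P + Q)/2"
    unfolding n1 using assms a2 by (simp add: divide_simps)
  have e2: "(N*N*P + N*Q - (N*P + N*N*Q))/(2*N) * (1/(N-1)) = (P - Q)/2"
    unfolding n2 using assms a2 by (simp add: divide_simps)
  have "(N*N*P + N*Q + (N*P + N*N*Q))/(2*N) * (1/(N+1) * (t + y))
      + (N*N*P + N*Q - (N*P + N*N*Q))/(2*N) * (1/(N-1) * (t - y))
     = (P + Q)/2 * (t + y) + (P - Q)/2 * (t - y)"
    by (simp only: mult.assoc[symmetric] e1 e2)
  also have "\<dots> = P*t + Q*y" by (simp add: field_simps)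
  finally show ?thesis by simp
qed


lemma exists_two: "CARD('n::finite) \<ge> 2 \<Longrightarrow> \<exists>i0 i1::'n. i0 \<noteq> i1"
proof -
  assume c: "CARD('n) \<ge> 2"
  obtain i0 :: 'n where True by simp
  have "UNIV \<noteq> {i0}"
  proof
    assume "UNIV = {i0}"
    then have "card (UNIV::'n set) = card {i0}" by (rule arg_cong)
    then have "CARD('n) = 1" by simp
    with c show False by simp
  qed
  then obtain i1 where "i1 \<noteq> i0" by blast
  then show ?thesis by blast
qed

lemma Wplus_nth: "Wplus x $ a $ b = 1 / (of_nat CARD('n) + 1) * (trace x * (if a = b then 1 else 0) + x $ b $ a)"
  for x :: "complex^'n^'n"
  by (simp add: Wplus_def)
lemma Wminus_nth: "Wminus x $ a $ b = 1 / (of_nat CARD('n) - 1) * (trace x * (if a = b then 1 else 0) - x $ b $ a)"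
  for x :: "complex^'n^'n"
  by (simp add: Wminus_def)

lemma twirl_formula:
  fixes \<mu> :: "(complex^'n^'n) measure"
  assumes n2: "CARD('n) \<ge> 2" and H: "haar_unitary \<mu>" and T: "clinear_map T"
  shows "twirl \<mu> T x = msc ((psi T + phi T) / (2 * of_nat CARD('n))) (Wplus x)
                      + msc ((psi T - phi T) / (2 * of_nat CARD('n))) (Wminus x)"
proof -
  define S where "S = twirl \<mu> T"
  have SL: "clinear_map S" unfolding S_def by (rule twirl_clinear[OF H T])
  have inv: "Kc S a b c d = Krho v (Kc S) a b c d" if v: "unitary_mat v" for v a b c d
  proof -
    have "rho v S = S" unfolding S_def by (rule ext, rule twirl_invariant[OF H T v])
    then have "Kc S a b c d = Kc (rho v S) a b c d" by simp
    also have "\<dots> = Krho v (Kc S) a b c d" by (rule Kc_rho[OF SL])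
    finally show ?thesis .
  qed
  obtain i0 i1 :: 'n where i01: "i0 \<noteq> i1" using exists_two[OF n2] by blast
  define P where "P = Kc S i0 i0 i1 i1"
  define Q where "Q = Kc S i0 i1 i1 i0"
  have KS: "Kc S a b c d = (if a = b \<and> c = d then P else 0) + (if a = d \<and> b = c then Q else 0)" for a b c d
    unfolding P_def Q_def by (rule classify[OF inv i01])
  define N :: complex where "N = of_nat CARD('n)"
  have psiS: "psi S = N*N*P + N*Q"
    by (simp add: psi_def KS sum.distrib N_def algebra_simps)
  have phiS: "phi S = N*P + N*N*Q"
  proof -
    have e: "\<And>a b::'n. (a = b \<and> b = a) = (a = b)" by auto
    show ?thesis by (simp add: phi_def KS sum.distrib N_def e sum.delta algebra_simps)
  qed
  have psiT: "psi T = N*N*P + N*Q" using psiS psi_twirl[OF H T] by (simp add: S_def)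
  have phiT: "phi T = N*P + N*N*Q" using phiS phi_twirl[OF H T] by (simp add: S_def)
  have Sx: "S x $ a $ b = P * (trace x * (if a = b then 1 else 0)) + Q * x $ b $ a" for a b
  proof -
    have "S x $ a $ b = (\<Sum>c\<in>UNIV. \<Sum>d\<in>UNIV. x$c$d * ((if a = b \<and> c = d then P else 0) + (if a = d \<and> b = c then Q else 0)))"
      by (simp add: lin_nth[OF SL] KS)
    also have "\<dots> = (\<Sum>c\<in>UNIV. \<Sum>d\<in>UNIV. x$c$d * (if a = b \<and> c = d then P else 0))
        + (\<Sum>c\<in>UNIV. \<Sum>d\<in>UNIV. x$c$d * (if a = d \<and> b = c then Q else 0))"
      by (simp only: distrib_left sum.distrib)
    also have "(\<Sum>c\<in>UNIV. \<Sum>d\<in>UNIV. x$c$d * (if a = d \<and> b = c then Q else 0)) = Q * x $ b $ a"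
    proof -
      have "(\<Sum>c\<in>UNIV. \<Sum>d\<in>UNIV. x$c$d * (if a = d \<and> b = c then Q else 0))
         = (\<Sum>c\<in>UNIV. \<Sum>d\<in>UNIV. if b = c \<and> a = d then Q * x$c$d else 0)"
        by (intro sum.cong refl) auto
      then show ?thesis by (simp only: sum_delta2)
    qed
    also have "(\<Sum>c\<in>UNIV. \<Sum>d\<in>UNIV. x$c$d * (if a = b \<and> c = d then P else 0)) = P * (trace x * (if a = b then 1 else 0))"
    proof (cases "a = b")
      case True
      have "(\<Sum>c\<in>UNIV. \<Sum>d\<in>UNIV. x$c$d * (if a = b \<and> c = d then P else 0))
         = (\<Sum>c\<in>UNIV. \<Sum>d\<in>UNIV. if c = d then P * x$c$d else 0)"
        using True by (intro sum.cong refl) auto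
      also have "\<dots> = P * trace x" by (simp add: sum.delta trace_def sum_distrib_left)
      finally show ?thesis using True by simp
    next
      case False
      then show ?thesis by simp
    qed
    finally show ?thesis .
  qed
  have N0: "N \<noteq> 0" "N + 1 \<noteq> 0" "N - 1 \<noteq> 0"
  proof -
    have c: "CARD('n) \<noteq> 0" "CARD('n) \<noteq> 1" using n2 by auto
    show "N \<noteq> 0" unfolding N_def using c by simp
    have "N + 1 = of_nat (CARD('n) + 1)" by (simp add: N_def)
    then show "N + 1 \<noteq> 0" by (simp only: of_nat_eq_0_iff)
    have "N \<noteq> 1" unfolding N_def using c(2) by (simp only: of_nat_eq_1_iff) simp
    then show "N - 1 \<noteq> 0" by simp
  qed
  show ?thesis
  proof -
    have "twirl \<mu> T x $ a $ b = (msc ((psi T + phi T) / (2 * of_nat CARD('n))) (Wplus x)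
                      + msc ((psi T - phi T) / (2 * of_nat CARD('n))) (Wminus x)) $ a $ b" for a b
    proof -
      have "twirl \<mu> T x $ a $ b = P * (trace x * (if a = b then 1 else 0)) + Q * x $ b $ a"
        using Sx by (simp add: S_def)
      also have "\<dots> = (N*N*P + N*Q + (N*P + N*N*Q))/(2*N) * (1/(N+1) * (trace x * (if a = b then 1 else 0) + x $ b $ a))
      + (N*N*P + N*Q - (N*P + N*N*Q))/(2*N) * (1/(N-1) * (trace x * (if a = b then 1 else 0) - x $ b $ a))"
        by (rule alg_id[OF N0])
      also have "\<dots> = (msc ((psi T + phi T) / (2 * of_nat CARD('n))) (Wplus x)
                      + msc ((psi T - phi T) / (2 * of_nat CARD('n))) (Wminus x)) $ a $ b"
        by (simp only: vector_add_component msc_nth Wplus_nth Wminus_nth psiT phiT N_def)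
      finally show ?thesis .
    qed
    then show ?thesis by (simp add: vec_eq_iff)
  qed
qed



lemma trace_munit: "trace (munit c d) = (if c = d then 1 else 0)"
proof (cases "c = d")
  case True then show ?thesis by (simp add: trace_def sum.delta)
next
  case False then show ?thesis by (simp add: trace_def) (intro sum.neutral, auto)
qed

lemma Wplus_clinear: "clinear_map (Wplus :: complex^'n^'n \<Rightarrow> complex^'n^'n)"
  unfolding clinear_map_def
  by (simp add: vec_eq_iff Wplus_nth trace_add trace_msc algebra_simps)

lemma Wminus_clinear: "clinear_map (Wminus :: complex^'n^'n \<Rightarrow> complex^'n^'n)"
  unfolding clinear_map_def
  by (simp add: vec_eq_iff Wminus_nth trace_add trace_msc algebra_simps)

lemma psi_Wplus: "psi (Wplus :: complex^'n^'n \<Rightarrow> complex^'n^'n) = of_nat CARD('n)"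
proof -
  define N :: complex where "N = of_nat CARD('n)"
  have N1: "N + 1 \<noteq> 0" unfolding N_def by (metis of_nat_Suc of_nat_eq_0_iff add.commute nat.distinct(1))
  have s: "(\<Sum>a\<in>(UNIV::'n set). \<Sum>c\<in>(UNIV::'n set). (1 + (if a = c then 1 else 0))) = N*N + N"
    by (simp add: sum.distrib N_def algebra_simps)
  have "psi (Wplus :: complex^'n^'n \<Rightarrow> complex^'n^'n) = (\<Sum>a\<in>(UNIV::'n set). \<Sum>c\<in>(UNIV::'n set). 1/(N+1) * (1 + (if a = c then 1 else 0)))"
    by (simp add: psi_def Kc_def Wplus_nth trace_munit N_def)
  also have "\<dots> = 1/(N+1) * (N*N + N)"
    by (simp only: sum_distrib_left[symmetric] s)
  also have "\<dots> = N" using N1 by (simp add: field_simps)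
  finally show ?thesis by (simp add: N_def)
qed

lemma phi_Wplus: "phi (Wplus :: complex^'n^'n \<Rightarrow> complex^'n^'n) = of_nat CARD('n)"
proof -
  define N :: complex where "N = of_nat CARD('n)"
  have N1: "N + 1 \<noteq> 0" unfolding N_def by (metis of_nat_Suc of_nat_eq_0_iff add.commute nat.distinct(1))
  have s: "(\<Sum>a\<in>(UNIV::'n set). \<Sum>c\<in>(UNIV::'n set). ((if a = c then 1 else 0) + 1)) = N + N*N"
    by (simp add: sum.distrib N_def algebra_simps)
  have "phi (Wplus :: complex^'n^'n \<Rightarrow> complex^'n^'n) = (\<Sum>a\<in>(UNIV::'n set). \<Sum>c\<in>(UNIV::'n set). 1/(N+1) * ((if a = c then 1 else 0) + 1))"
    unfolding phi_def Kc_def Wplus_nth trace_munit N_def by (intro sum.cong refl) auto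
  also have "\<dots> = 1/(N+1) * (N + N*N)"
    by (simp only: sum_distrib_left[symmetric] s)
  also have "\<dots> = N" using N1 by (simp add: field_simps)
  finally show ?thesis by (simp add: N_def)
qed

lemma psi_Wminus: "CARD('n) \<ge> 2 \<Longrightarrow> psi (Wminus :: complex^'n^'n \<Rightarrow> complex^'n^'n) = of_nat CARD('n)"
proof -
  assume n2: "CARD('n) \<ge> 2"
  define N :: complex where "N = of_nat CARD('n)"
  have N1: "N - 1 \<noteq> 0" unfolding N_def using n2 by (simp only: right_minus_eq of_nat_eq_1_iff)
  have s: "(\<Sum>a\<in>(UNIV::'n set). \<Sum>c\<in>(UNIV::'n set). (1 - (if a = c then 1 else 0))) = N*N - N"
    by (simp add: sum_subtractf N_def algebra_simps)
  have "psi (Wminus :: complex^'n^'n \<Rightarrow> complex^'n^'n) = (\<Sum>a\<in>(UNIV::'n set). \<Sum>c\<in>(UNIV::'n set). 1/(N-1) * (1 - (if a = c then 1 else 0)))"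
    unfolding psi_def Kc_def Wminus_nth trace_munit N_def by (intro sum.cong refl) auto
  also have "\<dots> = 1/(N-1) * (N*N - N)"
    by (simp only: sum_distrib_left[symmetric] s)
  also have "\<dots> = N" using N1 by (simp add: field_simps)
  finally show ?thesis by (simp add: N_def)
qed

lemma phi_Wminus: "CARD('n) \<ge> 2 \<Longrightarrow> phi (Wminus :: complex^'n^'n \<Rightarrow> complex^'n^'n) = - of_nat CARD('n)"
proof -
  assume n2: "CARD('n) \<ge> 2"
  define N :: complex where "N = of_nat CARD('n)"
  have N1: "N - 1 \<noteq> 0" unfolding N_def using n2 by (simp only: right_minus_eq of_nat_eq_1_iff)
  have s: "(\<Sum>a\<in>(UNIV::'n set). \<Sum>c\<in>(UNIV::'n set). ((if a = c then 1 else 0) - 1)) = N - N*N"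
    by (simp add: sum_subtractf N_def algebra_simps)
  have "phi (Wminus :: complex^'n^'n \<Rightarrow> complex^'n^'n) = (\<Sum>a\<in>(UNIV::'n set). \<Sum>c\<in>(UNIV::'n set). 1/(N-1) * ((if a = c then 1 else 0) - 1))"
    unfolding phi_def Kc_def Wminus_nth trace_munit N_def by (intro sum.cong refl) auto
  also have "\<dots> = 1/(N-1) * (N - N*N)"
    by (simp only: sum_distrib_left[symmetric] s)
  also have "\<dots> = - N" using N1 by (simp add: field_simps)
  finally show ?thesis by (simp add: N_def)
qed

lemma msc_1: "msc 1 A = A" by (simp add: vec_eq_iff)
lemma msc_0: "msc 0 A = 0" by (simp add: vec_eq_iff)

lemma twirl_Wplus:
  fixes \<mu> :: "(complex^'n^'n) measure"
  assumes n2: "CARD('n) \<ge> 2" and H: "haar_unitary \<mu>"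
  shows "twirl \<mu> Wplus = Wplus"
proof
  fix x :: "complex^'n^'n"
  have N0: "(of_nat CARD('n) :: complex) \<noteq> 0" by simp
  show "twirl \<mu> Wplus x = Wplus x"
    using N0 by (simp add: twirl_formula[OF n2 H Wplus_clinear] psi_Wplus phi_Wplus msc_1 msc_0)
qed

lemma twirl_Wminus:
  fixes \<mu> :: "(complex^'n^'n) measure"
  assumes n2: "CARD('n) \<ge> 2" and H: "haar_unitary \<mu>"
  shows "twirl \<mu> Wminus = Wminus"
proof
  fix x :: "complex^'n^'n"
  have N0: "(of_nat CARD('n) :: complex) \<noteq> 0" by simp
  show "twirl \<mu> Wminus x = Wminus x"
    using N0 by (simp add: twirl_formula[OF n2 H Wminus_clinear] psi_Wminus[OF n2] phi_Wminus[OF n2] msc_1 msc_0)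
qed



definition pA :: "complex^'n^'n \<Rightarrow> complex" where
  "pA A = (\<Sum>i\<in>UNIV. \<Sum>c\<in>UNIV. A$i$c * cnj (A$i$c))"
definition fA :: "complex^'n^'n \<Rightarrow> complex" where
  "fA A = (\<Sum>i\<in>UNIV. \<Sum>b\<in>UNIV. A$i$b * cnj (A$b$i))"

lemma ops_nth: "(\<Sum>k<d. a k ** x ** madj (a k)) $ i $ j = (\<Sum>k<d. \<Sum>p\<in>UNIV. \<Sum>q\<in>UNIV. a k$i$p * x$p$q * cnj (a k$j$q))"
  by (simp add: triple_nth)

lemma ops_clinear: "clinear_map (\<lambda>x. \<Sum>k<d. a k ** x ** madj (a k))"
  unfolding clinear_map_def
  by (simp add: vec_eq_iff triple_nth algebra_simps sum.distrib sum_distrib_left)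

lemma ops_Kc: "Kc (\<lambda>x. \<Sum>k<d. a k ** x ** madj (a k)) i j c e = (\<Sum>k<d. a k$i$c * cnj (a k$j$e))"
proof -
  have "Kc (\<lambda>x. \<Sum>k<d. a k ** x ** madj (a k)) i j c e =
     (\<Sum>k<d. \<Sum>p\<in>UNIV. \<Sum>q\<in>UNIV. if c = p \<and> e = q then a k$i$p * cnj (a k$j$q) else 0)"
    unfolding Kc_def ops_nth by (intro sum.cong refl) auto
  then show ?thesis by (simp only: sum_delta2)
qed

lemma sum3_swap: "(\<Sum>i\<in>A. \<Sum>c\<in>B. \<Sum>k\<in>C. f i c k) = (\<Sum>k\<in>C. \<Sum>i\<in>A. \<Sum>c\<in>B. f i c k)"
proof -
  have "(\<Sum>i\<in>A. \<Sum>c\<in>B. \<Sum>k\<in>C. f i c k) = (\<Sum>i\<in>A. \<Sum>k\<in>C. \<Sum>c\<in>B. f i c k)"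
    by (rule sum.cong[OF refl], rule sum.swap)
  also have "\<dots> = (\<Sum>k\<in>C. \<Sum>i\<in>A. \<Sum>c\<in>B. f i c k)" by (rule sum.swap)
  finally show ?thesis .
qed

lemma ops_psi: "psi (\<lambda>x. \<Sum>k<d. a k ** x ** madj (a k)) = (\<Sum>k<d. pA (a k))"
  unfolding psi_def ops_Kc pA_def by (rule sum3_swap)

lemma ops_phi: "phi (\<lambda>x. \<Sum>k<d. a k ** x ** madj (a k)) = (\<Sum>k<d. fA (a k))"
  unfolding phi_def ops_Kc fA_def by (rule sum3_swap)

lemma norm2_sq: "complex_of_real ((norm2 B)^2) = (\<Sum>j\<in>UNIV. \<Sum>l\<in>UNIV. cnj (B$l$j) * B$l$j) / of_nat CARD('n)"
  for B :: "complex^'n^'n"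
proof -
  define r where "r = (\<Sum>j\<in>(UNIV::'n set). \<Sum>l\<in>(UNIV::'n set). (cmod (B$l$j))^2)"
  have r0: "r \<ge> 0" unfolding r_def by (intro sum_nonneg) auto
  have tr: "trace (madj B ** B) = (\<Sum>j\<in>UNIV. \<Sum>l\<in>UNIV. cnj (B$l$j) * B$l$j)"
    by (simp add: trace_def mm_nth)
  have tr2: "(\<Sum>j\<in>UNIV. \<Sum>l\<in>UNIV. cnj (B$l$j) * B$l$j) = complex_of_real r"
    unfolding r_def of_real_sum
    by (intro sum.cong refl) (simp add: complex_norm_square mult.commute del: of_real_power)
  have tau: "tau (madj B ** B) = complex_of_real (r / real CARD('n))"
    by (simp add: tau_def tr tr2)
  have "norm2 B = sqrt (r / real CARD('n))"
    by (simp add: norm2_def tau)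
  then have "(norm2 B)^2 = r / real CARD('n)" using r0 by simp
  then show ?thesis using tr2 by simp
qed

lemma pA_swap: "(\<Sum>j\<in>UNIV. \<Sum>l\<in>UNIV. cnj (A$l$j) * A$l$j) = pA A"
  unfolding pA_def by (subst sum.swap) (simp add: mult.commute)
lemma pA_noswap: "(\<Sum>j\<in>UNIV. \<Sum>l\<in>UNIV. cnj (A$j$l) * A$j$l) = pA A"
  unfolding pA_def by (simp add: mult.commute)
lemma fA_noswap: "(\<Sum>j\<in>UNIV. \<Sum>l\<in>UNIV. cnj (A$l$j) * A$j$l) = fA A"
  unfolding fA_def by (simp add: mult.commute)
lemma fA_swap: "(\<Sum>j\<in>UNIV. \<Sum>l\<in>UNIV. cnj (A$j$l) * A$l$j) = fA A"
  unfolding fA_def by (subst sum.swap) (simp add: mult.commute)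

lemma expand_plus: "(\<Sum>j\<in>UNIV. \<Sum>l\<in>UNIV. cnj ((A + transpose A)$l$j) * (A + transpose A)$l$j) = 2 * pA A + 2 * fA A"
proof -
  have "(\<Sum>j\<in>UNIV. \<Sum>l\<in>UNIV. cnj ((A + transpose A)$l$j) * (A + transpose A)$l$j) =
    (\<Sum>j\<in>UNIV. \<Sum>l\<in>UNIV. cnj (A$l$j) * A$l$j) + (\<Sum>j\<in>UNIV. \<Sum>l\<in>UNIV. cnj (A$l$j) * A$j$l)
    + (\<Sum>j\<in>UNIV. \<Sum>l\<in>UNIV. cnj (A$j$l) * A$l$j) + (\<Sum>j\<in>UNIV. \<Sum>l\<in>UNIV. cnj (A$j$l) * A$j$l)"
    by (simp add: sum.distrib algebra_simps)
  then show ?thesis by (simp add: pA_swap pA_noswap fA_swap fA_noswap)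
qed

lemma expand_minus: "(\<Sum>j\<in>UNIV. \<Sum>l\<in>UNIV. cnj ((A - transpose A)$l$j) * (A - transpose A)$l$j) = 2 * pA A - 2 * fA A"
proof -
  have "(\<Sum>j\<in>UNIV. \<Sum>l\<in>UNIV. cnj ((A - transpose A)$l$j) * (A - transpose A)$l$j) =
    (\<Sum>j\<in>UNIV. \<Sum>l\<in>UNIV. cnj (A$l$j) * A$l$j) - (\<Sum>j\<in>UNIV. \<Sum>l\<in>UNIV. cnj (A$l$j) * A$j$l)
    - (\<Sum>j\<in>UNIV. \<Sum>l\<in>UNIV. cnj (A$j$l) * A$l$j) + (\<Sum>j\<in>UNIV. \<Sum>l\<in>UNIV. cnj (A$j$l) * A$j$l)"
    by (simp add: sum.distrib sum_subtractf algebra_simps)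
  then show ?thesis by (simp add: pA_swap pA_noswap fA_swap fA_noswap)
qed

lemma coef_plus:
  fixes a :: "nat \<Rightarrow> complex^'n^'n"
  shows "trace (jam (\<lambda>x. \<Sum>k<d. a k ** x ** madj (a k)) ** pplus) =
    complex_of_real ((1/4) * (\<Sum>i<d. (norm2 (a i + transpose (a i)))^2))"
proof -
  define N :: complex where "N = of_nat CARD('n)"
  have "complex_of_real ((1/4) * (\<Sum>i<d. (norm2 (a i + transpose (a i)))^2))
      = 1/4 * (\<Sum>i<d. complex_of_real ((norm2 (a i + transpose (a i)))^2))"
    by (simp only: of_real_mult of_real_sum) simp
  also have "\<dots> = 1/4 * (\<Sum>i<d. (2 * pA (a i) + 2 * fA (a i)) / N)"
    by (simp only: norm2_sq expand_plus N_def)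
  also have "\<dots> = ((\<Sum>i<d. pA (a i)) + (\<Sum>i<d. fA (a i))) / (2 * N)"
  proof -
    have "(\<Sum>i<d. (2 * pA (a i) + 2 * fA (a i)) / N) = (2 * (\<Sum>i<d. pA (a i)) + 2 * (\<Sum>i<d. fA (a i))) / N"
      by (simp only: sum_divide_distrib[symmetric] sum.distrib sum_distrib_left[symmetric])
    moreover have "1/4 * ((2 * X + 2 * Y) / N) = (X + Y) / (2 * N)" for X Y :: complex
      by (cases "N = 0") (simp_all add: field_simps)
    ultimately show ?thesis by simp
  qed
  finally have eq: "complex_of_real ((1/4) * (\<Sum>i<d. (norm2 (a i + transpose (a i)))^2)) = ((\<Sum>i<d. pA (a i)) + (\<Sum>i<d. fA (a i))) / (2 * N)" .
  show ?thesis
    by (simp only: eq trace_jam_pplus ops_psi ops_phi N_def)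
qed

lemma coef_minus:
  fixes a :: "nat \<Rightarrow> complex^'n^'n"
  shows "trace (jam (\<lambda>x. \<Sum>k<d. a k ** x ** madj (a k)) ** pminus) =
    complex_of_real ((1/4) * (\<Sum>i<d. (norm2 (a i - transpose (a i)))^2))"
proof -
  define N :: complex where "N = of_nat CARD('n)"
  have "complex_of_real ((1/4) * (\<Sum>i<d. (norm2 (a i - transpose (a i)))^2))
      = 1/4 * (\<Sum>i<d. complex_of_real ((norm2 (a i - transpose (a i)))^2))"
    by (simp only: of_real_mult of_real_sum) simp
  also have "\<dots> = 1/4 * (\<Sum>i<d. (2 * pA (a i) - 2 * fA (a i)) / N)"
    by (simp only: norm2_sq expand_minus N_def)
  also have "\<dots> = ((\<Sum>i<d. pA (a i)) - (\<Sum>i<d. fA (a i))) / (2 * N)"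
  proof -
    have "(\<Sum>i<d. (2 * pA (a i) - 2 * fA (a i)) / N) = (2 * (\<Sum>i<d. pA (a i)) - 2 * (\<Sum>i<d. fA (a i))) / N"
      by (simp only: sum_divide_distrib[symmetric] sum_subtractf sum_distrib_left[symmetric])
    moreover have "1/4 * ((2 * X - 2 * Y) / N) = (X - Y) / (2 * N)" for X Y :: complex
      by (cases "N = 0") (simp_all add: field_simps)
    ultimately show ?thesis by simp
  qed
  finally have eq: "complex_of_real ((1/4) * (\<Sum>i<d. (norm2 (a i - transpose (a i)))^2)) = ((\<Sum>i<d. pA (a i)) - (\<Sum>i<d. fA (a i))) / (2 * N)" .
  show ?thesis
    by (simp only: eq trace_jam_pminus ops_psi ops_phi N_def)
qed



theorem theorem4p5:
  fixes \<mu> :: "(complex^'n^'n) measure"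
  assumes n2: "CARD('n) \<ge> 2"
    and haar: "haar_unitary \<mu>"
  shows "(twirl \<mu> Wplus = Wplus \<and> twirl \<mu> Wminus = Wminus)
    \<and> (\<forall>T. clinear_map T \<longrightarrow>
           twirl \<mu> T = (\<lambda>x. msc (trace (jam T ** pplus)) (Wplus x)
                            + msc (trace (jam T ** pminus)) (Wminus x)))
    \<and> (\<forall>T (d::nat) (a :: nat \<Rightarrow> complex^'n^'n).
           (\<forall>x. T x = (\<Sum>i<d. a i ** x ** madj (a i))) \<longrightarrow>
           twirl \<mu> T = (\<lambda>x. msc (of_real ((1/4) * (\<Sum>i<d. (norm2 (a i + transpose (a i)))^2))) (Wplus x)
                            + msc (of_real ((1/4) * (\<Sum>i<d. (norm2 (a i - transpose (a i)))^2))) (Wminus x)))"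
proof (intro conjI allI impI)
  show "twirl \<mu> Wplus = Wplus" by (rule twirl_Wplus[OF n2 haar])
  show "twirl \<mu> Wminus = Wminus" by (rule twirl_Wminus[OF n2 haar])
next
  fix T :: "complex^'n^'n \<Rightarrow> complex^'n^'n"
  assume T: "clinear_map T"
  show "twirl \<mu> T = (\<lambda>x. msc (trace (jam T ** pplus)) (Wplus x) + msc (trace (jam T ** pminus)) (Wminus x))"
    by (rule ext) (simp only: twirl_formula[OF n2 haar T] trace_jam_pplus trace_jam_pminus)
next
  fix T :: "complex^'n^'n \<Rightarrow> complex^'n^'n" and d :: nat and a :: "nat \<Rightarrow> complex^'n^'n"
  assume "\<forall>x. T x = (\<Sum>i<d. a i ** x ** madj (a i))"
  then have Te: "T = (\<lambda>x. \<Sum>i<d. a i ** x ** madj (a i))" by blast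
  show "twirl \<mu> T = (\<lambda>x. msc (of_real ((1/4) * (\<Sum>i<d. (norm2 (a i + transpose (a i)))^2))) (Wplus x)
                            + msc (of_real ((1/4) * (\<Sum>i<d. (norm2 (a i - transpose (a i)))^2))) (Wminus x))"
    unfolding Te
    by (rule ext) (simp only: twirl_formula[OF n2 haar ops_clinear] trace_jam_pplus[symmetric]
        trace_jam_pminus[symmetric] coef_plus coef_minus)
qed

end
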